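(* In the setting described in the context, the following three conditions are equivalent: (1) there exists a capacity $\mu:2^{\mathcal C}\to L$ representing the training data, i.e. $S_\mu(x^{(k)})=\alpha^{(k)}$ for all $k\in\{1,\dots,N\}$; (2) the max–min system $(S)$ is consistent and $e(\mathcal C)=1$; (3) the min–max system $(\Sigma)$ is consistent and $f(\emptyset)=0$.
   Context: Let $\mathcal C=\{1,\dots,n\}$ and let $L$ be either a finite totally ordered set $0=\xi_1<\dots<\xi_l=1$ or $L=[0,1]$. A capacity is a map $\mu:2^{\mathcal C}\to L$ with $\mu(\emptyset)=0$, $\mu(\mathcal C)=1$, and $A\subseteq B\Rightarrow\mu(A)\le\mu(B)$. The Sugeno integral of $x\in L^n$ is $S_\mu(x)=\max_{A\subseteq\mathcal C}\min(\min_{i\in A}x_i,\mu(A))$ with $\min_{i\in\emptyset}x_i=1$. Training data: $N$ pairs $(x^{(k)},\alpha^{(k)})$ with $x^{(k)}\in L^n$, $\alpha^{(k)}\in L$. For nonempty $A$, $m_{k,A}=\min_{i\in A}x^{(k)}_i$; for $A\subsetneq\mathcal C$, $\gamma_{k,A}=\max_{i\in\mathcal C\setminus A}x^{(k)}_i$. The system $(S)$ has unknowns $\xi_A\in L$, $A\subseteq\mathcal C$ nonempty, and equations $\max_{A\neq\emptyset}\min(m_{k,A},\xi_A)=\alpha^{(k)}$ for $k=1,\dots,N$. The system $(\Sigma)$ has unknowns $\xi_A\in L$, $A\subsetneq\mathcal C$, and equations $\min_{A\subsetneq\mathcal C}\max(\gamma_{k,A},\xi_A)=\alpha^{(k)}$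 for $k=1,\dots,N$. A system is consistent if it has a solution in $L$. Gödel implication: $a\to_G b=1$ if $a\le b$, else $b$; epsilon product: $a\,\epsilon\,b=b$ if $a<b$, else $0$. Set $e(A)=\min_{k}(m_{k,A}\to_G\alpha^{(k)})$ for nonempty $A$ and $f(B)=\max_k(\gamma_{k,B}\,\epsilon\,\alpha^{(k)})$ for $B\subsetneq\mathcal C$. *)

theory Defs
  imports Complex_Main
begin

definition scale :: "real set \<Rightarrow> bool" where
  "scale L \<longleftrightarrow> (finite L \<and> L \<subseteq> {0..1} \<and> 0 \<in> L \<and> 1 \<in> L) \<or> L = {0..1}"

abbreviation crit :: "nat \<Rightarrow> nat set" where
  "crit n \<equiv> {1..n}"

definition capacity :: "real set \<Rightarrow> nat \<Rightarrow> (nat set \<Rightarrow> real) \<Rightarrow> bool" where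
  "capacity L n \<mu> \<longleftrightarrow>
     (\<forall>A. A \<subseteq> crit n \<longrightarrow> \<mu> A \<in> L) \<and> \<mu> {} = 0 \<and> \<mu> (crit n) = 1 \<and>
     (\<forall>A B. A \<subseteq> B \<longrightarrow> B \<subseteq> crit n \<longrightarrow> \<mu> A \<le> \<mu> B)"

definition minover :: "(nat \<Rightarrow> real) \<Rightarrow> nat set \<Rightarrow> real" where
  "minover x A = (if A = {} then 1 else Min (x ` A))"

definition sugeno :: "nat \<Rightarrow> (nat set \<Rightarrow> real) \<Rightarrow> (nat \<Rightarrow> real) \<Rightarrow> real" where
  "sugeno n \<mu> x = Max ((\<lambda>A. min (minover x A) (\<mu> A)) ` Pow (crit n))"

text \<open>m_{k,A} for nonempty A, gamma_{k,A} for A a proper subset of C.\<close>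
definition mkA :: "(nat \<Rightarrow> nat \<Rightarrow> real) \<Rightarrow> nat \<Rightarrow> nat set \<Rightarrow> real" where
  "mkA x k A = Min (x k ` A)"

definition gammakA :: "nat \<Rightarrow> (nat \<Rightarrow> nat \<Rightarrow> real) \<Rightarrow> nat \<Rightarrow> nat set \<Rightarrow> real" where
  "gammakA n x k A = Max (x k ` (crit n - A))"

definition S_consistent ::
  "real set \<Rightarrow> nat \<Rightarrow> nat \<Rightarrow> (nat \<Rightarrow> nat \<Rightarrow> real) \<Rightarrow> (nat \<Rightarrow> real) \<Rightarrow> bool" where
  "S_consistent L n N x \<alpha> \<longleftrightarrow>
     (\<exists>\<xi> :: nat set \<Rightarrow> real.
        (\<forall>A. A \<subseteq> crit n \<and> A \<noteq> {} \<longrightarrow> \<xi> A \<in> L) \<and>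
        (\<forall>k\<in>{1..N}. Max ((\<lambda>A. min (mkA x k A) (\<xi> A)) ` {A. A \<subseteq> crit n \<and> A \<noteq> {}}) = \<alpha> k))"

definition Sigma_consistent ::
  "real set \<Rightarrow> nat \<Rightarrow> nat \<Rightarrow> (nat \<Rightarrow> nat \<Rightarrow> real) \<Rightarrow> (nat \<Rightarrow> real) \<Rightarrow> bool" where
  "Sigma_consistent L n N x \<alpha> \<longleftrightarrow>
     (\<exists>\<xi> :: nat set \<Rightarrow> real.
        (\<forall>A. A \<subset> crit n \<longrightarrow> \<xi> A \<in> L) \<and>
        (\<forall>k\<in>{1..N}. Min ((\<lambda>A. max (gammakA n x k A) (\<xi> A)) ` {A. A \<subset> crit n}) = \<alpha> k))"

definition goedel_imp :: "real \<Rightarrow> real \<Rightarrow> real" where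
  "goedel_imp a b = (if a \<le> b then 1 else b)"

definition eps_prod :: "real \<Rightarrow> real \<Rightarrow> real" where
  "eps_prod a b = (if a < b then b else 0)"

definition e_fun :: "nat \<Rightarrow> (nat \<Rightarrow> nat \<Rightarrow> real) \<Rightarrow> (nat \<Rightarrow> real) \<Rightarrow> nat set \<Rightarrow> real" where
  "e_fun N x \<alpha> A = Min ((\<lambda>k. goedel_imp (mkA x k A) (\<alpha> k)) ` {1..N})"

definition f_fun :: "nat \<Rightarrow> nat \<Rightarrow> (nat \<Rightarrow> nat \<Rightarrow> real) \<Rightarrow> (nat \<Rightarrow> real) \<Rightarrow> nat set \<Rightarrow> real" where
  "f_fun n N x \<alpha> B = Max ((\<lambda>k. eps_prod (gammakA n x k B) (\<alpha> k)) ` {1..N})"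

end

theory Submission
  imports Defs
begin


lemma scale_props: assumes "scale L" shows "L \<subseteq> {0..1}" "0 \<in> L" "1 \<in> L"
  using assms unfolding scale_def by auto

lemma fin_P: "finite {A. A \<subseteq> crit n \<and> A \<noteq> {}}"
  by (rule finite_subset[of _ "Pow (crit n)"]) auto

lemma fin_Q: "finite {A. A \<subset> crit n}"
  by (rule finite_subset[of _ "Pow (crit n)"]) auto

lemma sugeno_dual:
  fixes \<mu> :: "nat set \<Rightarrow> real" and y :: "nat \<Rightarrow> real"
  assumes n: "n \<ge> 1"
    and mono: "\<forall>A B. A \<subseteq> B \<longrightarrow> B \<subseteq> crit n \<longrightarrow> \<mu> A \<le> \<mu> B"
    and e: "\<mu> {} = 0" and f: "\<mu> (crit n) = 1"
    and y1: "\<forall>i\<in>crit n. y i \<le> 1"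
  shows "sugeno n \<mu> y = Min ((\<lambda>A. max (Max (y ` (crit n - A))) (\<mu> A)) ` {A. A \<subset> crit n})"
proof -
  define s where "s = sugeno n \<mu> y"
  define G where "G = (\<lambda>A. max (Max (y ` (crit n - A))) (\<mu> A))"
  have s_ge: "min (minover y A) (\<mu> A) \<le> s" if "A \<subseteq> crit n" for A
    unfolding s_def sugeno_def by (rule Max_ge) (use that in auto)
  have s_in: "s \<in> (\<lambda>A. min (minover y A) (\<mu> A)) ` Pow (crit n)"
    unfolding s_def sugeno_def by (rule Max_in) auto
  have le: "s \<le> G B" if B: "B \<subset> crit n" for B
  proof -
    from s_in obtain A where A: "A \<subseteq> crit n" "s = min (minover y A) (\<mu> A)" by auto
    show ?thesis
    proof (cases "A \<subseteq> B")
      case True then have "\<mu> A \<le> \<mu> B" using mono B by auto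
      then show ?thesis using A unfolding G_def by auto
    next
      case False then obtain i where i: "i \<in> A" "i \<notin> B" by auto
      have finA: "finite A" using A by (auto intro: finite_subset)
      have "minover y A \<le> y i" unfolding minover_def using i finA by auto
      also have "y i \<le> Max (y ` (crit n - B))" using i A by (intro Max_ge) auto
      finally show ?thesis using A unfolding G_def by auto
    qed
  qed
  define A0 where "A0 = {i \<in> crit n. y i > s}"
  have ne: "crit n \<noteq> {}" using n by auto
  have A0C: "A0 \<subset> crit n"
  proof -
    have "A0 \<subseteq> crit n" by (auto simp: A0_def)
    moreover have "A0 \<noteq> crit n"
    proof
      assume h: "A0 = crit n"
      have "\<forall>i\<in>crit n. y i > s" using h by (auto simp: A0_def)
      then have "minover y (crit n) > s" unfolding minover_def using ne by simp
      moreover have "minover y (crit n) \<le> 1" unfolding minover_def using ne y1 n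
        by (simp add: Min_le_iff) (meson atLeastAtMost_iff order_refl)
      ultimately show False using s_ge[of "crit n"] f by auto
    qed
    ultimately show ?thesis by auto
  qed
  have "\<mu> A0 \<le> s"
  proof (cases "A0 = {}")
    case True then show ?thesis using e s_ge[of "{}"] by (simp add: minover_def)
  next
    case False
    have finA0: "finite A0" by (simp add: A0_def)
    have "minover y A0 > s" using False finA0 unfolding minover_def
      by (subst if_not_P[OF False]) (simp add: Min_gr_iff A0_def)
    with s_ge[of A0] A0C show ?thesis by auto
  qed
  moreover have "Max (y ` (crit n - A0)) \<le> s"
    using A0C by (subst Max_le_iff) (auto simp: A0_def)
  ultimately have "G A0 \<le> s" unfolding G_def by simp
  moreover have "Min (G ` {A. A \<subset> crit n}) \<le> G A0" using A0C fin_Q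
    by (intro Min_le) auto
  ultimately have "Min (G ` {A. A \<subset> crit n}) \<le> s" by linarith
  moreover have "s \<le> Min (G ` {A. A \<subset> crit n})" using le fin_Q A0C
    by (subst Min_ge_iff) auto
  ultimately show ?thesis unfolding s_def G_def by simp
qed


lemma sugeno_P:
  fixes \<mu> :: "nat set \<Rightarrow> real" and y :: "nat \<Rightarrow> real"
  assumes n: "n \<ge> 1" and pos: "\<forall>A. A \<subseteq> crit n \<longrightarrow> \<mu> A \<ge> 0" and e: "\<mu> {} = 0"
    and y: "\<forall>i\<in>crit n. y i \<ge> 0"
  shows "sugeno n \<mu> y = Max ((\<lambda>A. min (Min (y ` A)) (\<mu> A)) ` {A. A \<subseteq> crit n \<and> A \<noteq> {}})"
proof -
  define P where "P = {A. A \<subseteq> crit n \<and> A \<noteq> {}}"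
  define f where "f = (\<lambda>A. min (minover y A) (\<mu> A))"
  define g where "g = (\<lambda>A. min (Min (y ` A)) (\<mu> A))"
  have finP: "finite P" unfolding P_def by (rule fin_P)
  have ne: "crit n \<noteq> {}" using n by auto
  have CP: "crit n \<in> P" using ne by (simp add: P_def)
  have m0: "Min (y ` crit n) \<ge> 0" using y ne by (simp add: Min_ge_iff)
  have gC: "g (crit n) \<ge> 0" unfolding g_def using pos m0 by simp
  have gP: "g (crit n) \<le> Max (g ` P)"
    using CP finP by (intro Max_ge) auto
  have fg: "f A = g A" if "A \<noteq> {}" for A using that by (simp add: f_def g_def minover_def)
  have "Max (f ` Pow (crit n)) = Max (g ` P)"
  proof (rule antisym)
    show "Max (f ` Pow (crit n)) \<le> Max (g ` P)"
    proof (rule Max.boundedI)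
      fix a assume "a \<in> f ` Pow (crit n)"
      then obtain A where A: "A \<subseteq> crit n" "a = f A" by auto
      show "a \<le> Max (g ` P)"
      proof (cases "A = {}")
        case True then have "a = 0" using A e by (simp add: f_def minover_def)
        then show ?thesis using gC gP by linarith
      next
        case False then have "a = g A" using A fg by simp
        moreover have "g A \<le> Max (g ` P)" using A False finP by (intro Max_ge) (auto simp: P_def)
        ultimately show ?thesis by simp
      qed
    qed auto
    show "Max (g ` P) \<le> Max (f ` Pow (crit n))"
    proof (rule Max.boundedI)
      fix a assume "a \<in> g ` P"
      then obtain A where A: "A \<subseteq> crit n" "A \<noteq> {}" "a = g A" by (auto simp: P_def)
      then have "a = f A" using fg by simp
      moreover have "f A \<le> Max (f ` Pow (crit n))" using A by (intro Max_ge) auto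
      ultimately show "a \<le> Max (f ` Pow (crit n))" by simp
    qed (use finP CP in auto)
  qed
  then show ?thesis unfolding sugeno_def f_def g_def P_def by simp
qed


lemma sugeno_ge: "A \<subseteq> crit n \<Longrightarrow> min (minover y A) (\<mu> A) \<le> sugeno n \<mu> y"
  unfolding sugeno_def by (rule Max_ge) auto

lemma gi_anti: "a' \<le> a \<Longrightarrow> b \<le> 1 \<Longrightarrow> goedel_imp a b \<le> goedel_imp a' b"
  by (auto simp: goedel_imp_def)
lemma gi_adj: "min a c \<le> b \<Longrightarrow> c \<le> 1 \<Longrightarrow> c \<le> goedel_imp a b"
  by (auto simp: goedel_imp_def)
lemma gi_mp: "min a (goedel_imp a b) \<le> b"
  by (auto simp: goedel_imp_def)
lemma eps_anti: "a' \<le> a \<Longrightarrow> 0 \<le> b \<Longrightarrow> eps_prod a b \<le> eps_prod a' b"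
  by (auto simp: eps_prod_def)
lemma eps_adj: "b \<le> max a c \<Longrightarrow> 0 \<le> c \<Longrightarrow> eps_prod a b \<le> c"
  by (auto simp: eps_prod_def)
lemma eps_mp: "b \<le> max a (eps_prod a b)"
  by (auto simp: eps_prod_def)

theorem theorem1:
  fixes L :: "real set" and n N :: nat
    and x :: "nat \<Rightarrow> nat \<Rightarrow> real" and \<alpha> :: "nat \<Rightarrow> real"
  assumes "scale L"
    and "n \<ge> 1" and "N \<ge> 1"
    and "\<forall>k\<in>{1..N}. \<forall>i\<in>{1..n}. x k i \<in> L"
    and "\<forall>k\<in>{1..N}. \<alpha> k \<in> L"
  shows "((\<exists>\<mu>. capacity L n \<mu> \<and> (\<forall>k\<in>{1..N}. sugeno n \<mu> (x k) = \<alpha> k))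
            \<longleftrightarrow> (S_consistent L n N x \<alpha> \<and> e_fun N x \<alpha> {1..n} = 1))
       \<and> ((\<exists>\<mu>. capacity L n \<mu> \<and> (\<forall>k\<in>{1..N}. sugeno n \<mu> (x k) = \<alpha> k))
            \<longleftrightarrow> (Sigma_consistent L n N x \<alpha> \<and> f_fun n N x \<alpha> {} = 0))"
proof -
  note sc = scale_props[OF assms(1)]
  have n: "n \<ge> 1" and NN: "N \<ge> 1" using assms by auto
  have xr: "0 \<le> x k i \<and> x k i \<le> 1" if "k \<in> {1..N}" "i \<in> crit n" for k i
    using assms(4) sc(1) that by fastforce
  have aL: "\<alpha> k \<in> L" if "k \<in> {1..N}" for k using assms(5) that by blast
  have ar: "0 \<le> \<alpha> k \<and> \<alpha> k \<le> 1" if "k \<in> {1..N}" for k using aL[OF that] sc(1) by auto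
  have ne: "crit n \<noteq> {}" using n by auto
  have Nne: "{1..N} \<noteq> {}" using NN by auto
  define P where "P = {A. A \<subseteq> crit n \<and> A \<noteq> {}}"
  define Q where "Q = {A. A \<subset> crit n}"
  have finP: "finite P" unfolding P_def by (rule fin_P)
  have finQ: "finite Q" unfolding Q_def by (rule fin_Q)
  have CP: "crit n \<in> P" using ne by (simp add: P_def)
  have EQ: "{} \<in> Q" using ne by (auto simp: Q_def)
  have mk_mono: "mkA x k B \<le> mkA x k A" if "A \<subseteq> B" "B \<subseteq> crit n" "A \<noteq> {}" for k A B
    unfolding mkA_def using that by (intro Min_antimono) (auto intro: finite_subset)
  have ga_mono: "gammakA n x k B \<le> gammakA n x k A" if "A \<subseteq> B" "B \<subset> crit n" for k A B
    unfolding gammakA_def using that by (intro Max_mono) auto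
  have ga_pos: "0 \<le> gammakA n x k B" if kB: "k \<in> {1..N}" "B \<subset> crit n" for k B
  proof -
    obtain i where i: "i \<in> crit n" "i \<notin> B" using kB(2) by blast
    have "x k i \<le> gammakA n x k B" unfolding gammakA_def using i by (intro Max_ge) auto
    then show ?thesis using xr[OF kB(1) i(1)] by linarith
  qed
  have mk_minover: "mkA x k A = minover (x k) A" if "A \<noteq> {}" for k A
    using that by (simp add: mkA_def minover_def)
  let ?Cap = "\<exists>\<mu>. capacity L n \<mu> \<and> (\<forall>k\<in>{1..N}. sugeno n \<mu> (x k) = \<alpha> k)"

  have c2s: "S_consistent L n N x \<alpha> \<and> e_fun N x \<alpha> (crit n) = 1" if ?Cap
  proof -
    from that obtain \<mu> where cap: "capacity L n \<mu>" and rep: "\<forall>k\<in>{1..N}. sugeno n \<mu> (x k) = \<alpha> k"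
      by blast
    have \<mu>L: "\<forall>A. A \<subseteq> crit n \<longrightarrow> \<mu> A \<in> L" and \<mu>0: "\<mu> {} = 0" and \<mu>1: "\<mu> (crit n) = 1"
      and mono: "\<forall>A B. A \<subseteq> B \<longrightarrow> B \<subseteq> crit n \<longrightarrow> \<mu> A \<le> \<mu> B"
      using cap unfolding capacity_def by auto
    have pos: "\<forall>A. A \<subseteq> crit n \<longrightarrow> \<mu> A \<ge> 0" using mono \<mu>0 by (metis empty_subsetI)
    have rep': "Max ((\<lambda>A. min (mkA x k A) (\<mu> A)) ` P) = \<alpha> k" if k: "k \<in> {1..N}" for k
    proof -
      have "sugeno n \<mu> (x k) = Max ((\<lambda>A. min (Min (x k ` A)) (\<mu> A)) ` P)"
        unfolding P_def by (rule sugeno_P[OF n pos \<mu>0]) (use xr[OF k] in auto)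
      then show ?thesis using rep k by (simp add: mkA_def)
    qed
    have S: "S_consistent L n N x \<alpha>"
      unfolding S_consistent_def using \<mu>L rep' unfolding P_def by blast
    have gi1: "goedel_imp (mkA x k (crit n)) (\<alpha> k) = 1" if k: "k \<in> {1..N}" for k
    proof -
      have "min (minover (x k) (crit n)) (\<mu> (crit n)) \<le> sugeno n \<mu> (x k)" by (rule sugeno_ge) auto
      moreover have "minover (x k) (crit n) \<le> 1"
        using ne xr[OF k] by (simp add: minover_def Min_le_iff) (meson atLeastAtMost_iff order_refl)
      ultimately have "mkA x k (crit n) \<le> \<alpha> k" using \<mu>1 rep k mk_minover[OF ne] by auto
      then show ?thesis by (simp add: goedel_imp_def)
    qed
    have "(\<lambda>k. goedel_imp (mkA x k (crit n)) (\<alpha> k)) ` {1..N} = {1}" using gi1 Nne by auto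
    then have "e_fun N x \<alpha> (crit n) = 1" unfolding e_fun_def by simp
    with S show ?thesis by blast
  qed

  have s2c: ?Cap if "S_consistent L n N x \<alpha>" and e1: "e_fun N x \<alpha> (crit n) = 1"
  proof -
    from that(1) obtain \<xi> where \<xi>L: "\<forall>A. A \<subseteq> crit n \<and> A \<noteq> {} \<longrightarrow> \<xi> A \<in> L"
      and \<xi>eq: "\<forall>k\<in>{1..N}. Max ((\<lambda>A. min (mkA x k A) (\<xi> A)) ` P) = \<alpha> k"
      unfolding S_consistent_def P_def by blast
    define E where "E = e_fun N x \<alpha>"
    have EL: "E A \<in> L" for A
    proof -
      have "E A \<in> (\<lambda>k. goedel_imp (mkA x k A) (\<alpha> k)) ` {1..N}"
        unfolding E_def e_fun_def using Nne by (intro Min_in) auto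
      then obtain k where k: "k \<in> {1..N}" "E A = goedel_imp (mkA x k A) (\<alpha> k)" by auto
      then show ?thesis using aL[OF k(1)] sc(3) by (simp add: goedel_imp_def)
    qed
    have Er: "0 \<le> E A \<and> E A \<le> 1" for A using EL[of A] sc(1) by auto
    have Ele: "E A \<le> goedel_imp (mkA x k A) (\<alpha> k)" if "k \<in> {1..N}" for k A
      unfolding E_def e_fun_def using that by (intro Min_le) auto
    have Emono: "E A \<le> E B" if "A \<noteq> {}" "A \<subseteq> B" "B \<subseteq> crit n" for A B
    proof -
      have "E A \<le> goedel_imp (mkA x k B) (\<alpha> k)" if k: "k \<in> {1..N}" for k
        using Ele[OF k, of A] gi_anti[OF mk_mono[of A B k], of "\<alpha> k"] \<open>A \<noteq> {}\<close> \<open>A \<subseteq> B\<close>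
          \<open>B \<subseteq> crit n\<close> ar[OF k] by linarith
      then show ?thesis unfolding E_def e_fun_def[of N x \<alpha> B] using Nne
        by (subst Min_ge_iff) (auto simp: E_def)
    qed
    have \<xi>le: "\<xi> A \<le> E A" if A: "A \<in> P" for A
    proof -
      have "\<xi> A \<le> goedel_imp (mkA x k A) (\<alpha> k)" if k: "k \<in> {1..N}" for k
      proof (rule gi_adj)
        have "min (mkA x k A) (\<xi> A) \<le> Max ((\<lambda>A. min (mkA x k A) (\<xi> A)) ` P)"
          using A finP by (intro Max_ge) auto
        then show "min (mkA x k A) (\<xi> A) \<le> \<alpha> k" using \<xi>eq k by simp
        have "\<xi> A \<in> L" using \<xi>L A by (auto simp: P_def)
        then show "\<xi> A \<le> 1" using sc(1) by auto
      qed
      then show ?thesis unfolding E_def e_fun_def using Nne by (subst Min_ge_iff) auto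
    qed
    have Ebd: "min (mkA x k A) (E A) \<le> \<alpha> k" if "k \<in> {1..N}" for k A
      using Ele[OF that, of A] gi_mp[of "mkA x k A" "\<alpha> k"] by linarith
    define \<mu> where "\<mu> = (\<lambda>A. if A = {} then 0 else E A)"
    have cap: "capacity L n \<mu>"
      unfolding capacity_def
    proof (intro conjI allI impI)
      show "\<mu> A \<in> L" for A using EL sc(2) by (simp add: \<mu>_def)
      show "\<mu> {} = 0" by (simp add: \<mu>_def)
      show "\<mu> (crit n) = 1" using ne e1 by (simp add: \<mu>_def E_def)
      show "\<mu> A \<le> \<mu> B" if "A \<subseteq> B" "B \<subseteq> crit n" for A B
        using that Emono[of A B] Er[of B] by (auto simp: \<mu>_def)
    qed
    have pos: "\<forall>A. A \<subseteq> crit n \<longrightarrow> \<mu> A \<ge> 0" using Er by (simp add: \<mu>_def)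
    have rep: "sugeno n \<mu> (x k) = \<alpha> k" if k: "k \<in> {1..N}" for k
    proof -
      have "sugeno n \<mu> (x k) = Max ((\<lambda>A. min (Min (x k ` A)) (\<mu> A)) ` P)"
        unfolding P_def by (rule sugeno_P[OF n pos]) (use xr[OF k] in \<open>auto simp: \<mu>_def\<close>)
      also have "\<dots> = Max ((\<lambda>A. min (mkA x k A) (E A)) ` P)"
        by (rule arg_cong[where f=Max], rule image_cong) (auto simp: P_def \<mu>_def mkA_def)
      also have "\<dots> = \<alpha> k"
      proof (rule antisym)
        show "Max ((\<lambda>A. min (mkA x k A) (E A)) ` P) \<le> \<alpha> k"
          using finP CP Ebd[OF k] by (intro Max.boundedI) auto
        have "Max ((\<lambda>A. min (mkA x k A) (\<xi> A)) ` P) \<in> (\<lambda>A. min (mkA x k A) (\<xi> A)) ` P"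
          using finP CP by (intro Max_in) auto
        then obtain A0 where A0: "A0 \<in> P" "\<alpha> k = min (mkA x k A0) (\<xi> A0)"
          using \<xi>eq k by auto
        have "\<alpha> k \<le> min (mkA x k A0) (E A0)" using A0 \<xi>le[OF A0(1)] by linarith
        also have "\<dots> \<le> Max ((\<lambda>A. min (mkA x k A) (E A)) ` P)"
          using A0 finP by (intro Max_ge) auto
        finally show "\<alpha> k \<le> Max ((\<lambda>A. min (mkA x k A) (E A)) ` P)" .
      qed
      finally show ?thesis .
    qed
    show ?thesis using cap rep by blast
  qed

  have c2g: "Sigma_consistent L n N x \<alpha> \<and> f_fun n N x \<alpha> {} = 0" if ?Cap
  proof -
    from that obtain \<mu> where cap: "capacity L n \<mu>" and rep: "\<forall>k\<in>{1..N}. sugeno n \<mu> (x k) = \<alpha> k"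
      by blast
    have \<mu>L: "\<forall>A. A \<subseteq> crit n \<longrightarrow> \<mu> A \<in> L" and \<mu>0: "\<mu> {} = 0" and \<mu>1: "\<mu> (crit n) = 1"
      and mono: "\<forall>A B. A \<subseteq> B \<longrightarrow> B \<subseteq> crit n \<longrightarrow> \<mu> A \<le> \<mu> B"
      using cap unfolding capacity_def by auto
    have dual: "Min ((\<lambda>A. max (gammakA n x k A) (\<mu> A)) ` Q) = \<alpha> k" if k: "k \<in> {1..N}" for k
    proof -
      have "sugeno n \<mu> (x k) = Min ((\<lambda>A. max (Max (x k ` (crit n - A))) (\<mu> A)) ` Q)"
        unfolding Q_def by (rule sugeno_dual[OF n mono \<mu>0 \<mu>1]) (use xr[OF k] in auto)
      then show ?thesis using rep k by (simp add: gammakA_def)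
    qed
    have S: "Sigma_consistent L n N x \<alpha>"
      unfolding Sigma_consistent_def using \<mu>L dual unfolding Q_def by blast
    have ep0: "eps_prod (gammakA n x k {}) (\<alpha> k) = 0" if k: "k \<in> {1..N}" for k
    proof -
      have "Min ((\<lambda>A. max (gammakA n x k A) (\<mu> A)) ` Q) \<le> max (gammakA n x k {}) (\<mu> {})"
        using EQ finQ by (intro Min_le) auto
      then have "\<alpha> k \<le> gammakA n x k {}" using dual[OF k] \<mu>0 ga_pos[OF k, of "{}"] EQ
        by (simp add: Q_def)
      then show ?thesis by (simp add: eps_prod_def)
    qed
    have "(\<lambda>k. eps_prod (gammakA n x k {}) (\<alpha> k)) ` {1..N} = {0}" using ep0 Nne by auto
    then have "f_fun n N x \<alpha> {} = 0" unfolding f_fun_def by simp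
    with S show ?thesis by blast
  qed

  have g2c: ?Cap if "Sigma_consistent L n N x \<alpha>" and f0: "f_fun n N x \<alpha> {} = 0"
  proof -
    from that(1) obtain \<xi> where \<xi>L: "\<forall>A. A \<subset> crit n \<longrightarrow> \<xi> A \<in> L"
      and \<xi>eq: "\<forall>k\<in>{1..N}. Min ((\<lambda>A. max (gammakA n x k A) (\<xi> A)) ` Q) = \<alpha> k"
      unfolding Sigma_consistent_def Q_def by blast
    define F where "F = f_fun n N x \<alpha>"
    have FL: "F A \<in> L" for A
    proof -
      have "F A \<in> (\<lambda>k. eps_prod (gammakA n x k A) (\<alpha> k)) ` {1..N}"
        unfolding F_def f_fun_def using Nne by (intro Max_in) auto
      then obtain k where k: "k \<in> {1..N}" "F A = eps_prod (gammakA n x k A) (\<alpha> k)" by auto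
      then show ?thesis using aL[OF k(1)] sc(2) by (simp add: eps_prod_def)
    qed
    have Fr: "0 \<le> F A \<and> F A \<le> 1" for A using FL[of A] sc(1) by auto
    have Fge: "eps_prod (gammakA n x k A) (\<alpha> k) \<le> F A" if "k \<in> {1..N}" for k A
      unfolding F_def f_fun_def using that by (intro Max_ge) auto
    have Fmono: "F A \<le> F B" if "A \<subseteq> B" "B \<subset> crit n" for A B
    proof -
      have "eps_prod (gammakA n x k A) (\<alpha> k) \<le> F B" if k: "k \<in> {1..N}" for k
        using Fge[OF k, of B] eps_anti[OF ga_mono[of A B k], of "\<alpha> k"] \<open>A \<subseteq> B\<close>
          \<open>B \<subset> crit n\<close> ar[OF k] by linarith
      then show ?thesis unfolding F_def f_fun_def[of n N x \<alpha> A] using Nne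
        by (subst Max_le_iff) (auto simp: F_def)
    qed
    have \<xi>ge: "F B \<le> \<xi> B" if B: "B \<in> Q" for B
    proof -
      have "eps_prod (gammakA n x k B) (\<alpha> k) \<le> \<xi> B" if k: "k \<in> {1..N}" for k
      proof (rule eps_adj)
        have "Min ((\<lambda>A. max (gammakA n x k A) (\<xi> A)) ` Q) \<le> max (gammakA n x k B) (\<xi> B)"
          using B finQ by (intro Min_le) auto
        then show "\<alpha> k \<le> max (gammakA n x k B) (\<xi> B)" using \<xi>eq k by simp
        have "\<xi> B \<in> L" using \<xi>L B by (auto simp: Q_def)
        then show "0 \<le> \<xi> B" using sc(1) by auto
      qed
      then show ?thesis unfolding F_def f_fun_def using Nne by (subst Max_le_iff) auto
    qed
    have Fbd: "\<alpha> k \<le> max (gammakA n x k B) (F B)" if "k \<in> {1..N}" for k B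
      using Fge[OF that, of B] eps_mp[of "\<alpha> k" "gammakA n x k B"] by linarith
    define \<mu> where "\<mu> = (\<lambda>A. if A = crit n then 1 else F A)"
    have \<mu>0: "\<mu> {} = 0" using ne f0 by (simp add: \<mu>_def F_def)
    have \<mu>1: "\<mu> (crit n) = 1" by (simp add: \<mu>_def)
    have mono: "\<forall>A B. A \<subseteq> B \<longrightarrow> B \<subseteq> crit n \<longrightarrow> \<mu> A \<le> \<mu> B"
    proof (intro allI impI)
      fix A B :: "nat set" assume AB: "A \<subseteq> B" "B \<subseteq> crit n"
      show "\<mu> A \<le> \<mu> B"
      proof (cases "B = crit n")
        case True then show ?thesis using Fr[of A] by (simp add: \<mu>_def)
      next
        case False
        then have "B \<subset> crit n" "A \<noteq> crit n" using AB by auto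
        then show ?thesis using Fmono[OF AB(1)] False by (simp add: \<mu>_def)
      qed
    qed
    have cap: "capacity L n \<mu>"
      unfolding capacity_def using FL sc(3) \<mu>0 \<mu>1 mono by (simp add: \<mu>_def)
    have rep: "sugeno n \<mu> (x k) = \<alpha> k" if k: "k \<in> {1..N}" for k
    proof -
      have "sugeno n \<mu> (x k) = Min ((\<lambda>A. max (Max (x k ` (crit n - A))) (\<mu> A)) ` Q)"
        unfolding Q_def by (rule sugeno_dual[OF n mono \<mu>0 \<mu>1]) (use xr[OF k] in auto)
      also have "\<dots> = Min ((\<lambda>A. max (gammakA n x k A) (F A)) ` Q)"
        by (rule arg_cong[where f=Min], rule image_cong) (auto simp: Q_def \<mu>_def gammakA_def)
      also have "\<dots> = \<alpha> k"
      proof (rule antisym)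
        show "\<alpha> k \<le> Min ((\<lambda>A. max (gammakA n x k A) (F A)) ` Q)"
          using finQ EQ Fbd[OF k] by (intro Min.boundedI) auto
        have "Min ((\<lambda>A. max (gammakA n x k A) (\<xi> A)) ` Q) \<in> (\<lambda>A. max (gammakA n x k A) (\<xi> A)) ` Q"
          using finQ EQ by (intro Min_in) auto
        then obtain B0 where B0: "B0 \<in> Q" "\<alpha> k = max (gammakA n x k B0) (\<xi> B0)"
          using \<xi>eq k by auto
        have "Min ((\<lambda>A. max (gammakA n x k A) (F A)) ` Q) \<le> max (gammakA n x k B0) (F B0)"
          using B0 finQ by (intro Min_le) auto
        also have "\<dots> \<le> \<alpha> k" using B0 \<xi>ge[OF B0(1)] by linarith
        finally show "Min ((\<lambda>A. max (gammakA n x k A) (F A)) ` Q) \<le> \<alpha> k" .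
      qed
      finally show ?thesis .
    qed
    show ?thesis using cap rep by blast
  qed

  show ?thesis using c2s s2c c2g g2c by blast
qed

end
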